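(* Let $m \equiv 1 \pmod 4$ with $m > 1$, $n = 3^m - 1$, $v = (3^{(m-1)/2}+1)/2$ and $\delta = (3^{(m-1)/2}+13)/2$. Then $\gcd(v,n) = 1$, and, setting $T_{(1,2,m)}(v) = \{ vi \bmod n : i \in T_{(1,2,m)}\}$, we have $\{1, 2, \ldots, \delta-1\} \subseteq T_{(1,2,m)}(v)$.
   Context: For an integer $0 \le j \le n-1$ with $3$-adic expansion $j = \sum_{t=0}^{m-1} j_t 3^t$, $j_t \in \{0,1,2\}$, let $w_3(j) = \sum_{t=0}^{m-1} j_t$. For distinct $i_1,i_2 \in \{0,1,2,3\}$, $T_{(i_1,i_2,m)} = \{1 \le j \le n-1 : w_3(j) \equiv i_1 \text{ or } i_2 \pmod 4\}$. For an integer $b$, $b \bmod n$ is the unique $b_0 \in \{0,\ldots,n-1\}$ with $b \equiv b_0 \pmod n$. *)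

theory Defs
  imports Main
begin

fun w3 :: "nat \<Rightarrow> nat" where
  "w3 j = (if j = 0 then 0 else j mod 3 + w3 (j div 3))"

definition T_set :: "nat \<Rightarrow> nat \<Rightarrow> nat \<Rightarrow> nat set" where
  "T_set i1 i2 m = {j. 1 \<le> j \<and> j \<le> 3 ^ m - 2 \<and>
      (w3 j mod 4 = i1 \<or> w3 j mod 4 = i2)}"

end

theory Submission
  imports Defs
begin
lemma w3_0[simp]: "w3 0 = 0" by (subst w3.simps) simp
declare w3.simps[simp del]
lemma w3_step: "d < 3 \<Longrightarrow> w3 (3*x+d) = d + w3 x"
  by (subst w3.simps) auto
lemma w3_shift: "y < 3^j \<Longrightarrow> w3 (3^j*x + y) = w3 x + w3 y"
proof (induction j arbitrary: y)
  case 0 then show ?case by simp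
next
  case (Suc j)
  have e: "3^Suc j*x + y = 3*(3^j*x + y div 3) + y mod 3" by simp
  have "y div 3 < 3^j" using Suc.prems by simp
  then have "w3 (3^j*x + y div 3) = w3 x + w3 (y div 3)" by (rule Suc.IH)
  moreover have "w3 (3*(3^j*x + y div 3) + y mod 3) = y mod 3 + w3 (3^j*x + y div 3)"
    by (rule w3_step) simp
  moreover have "w3 (3*(y div 3) + y mod 3) = y mod 3 + w3 (y div 3)"
    by (rule w3_step) simp
  ultimately have "w3 (3*(3^j*x + y div 3) + y mod 3) = w3 x + w3 (3*(y div 3) + y mod 3)" by simp
  then show ?case by (simp only: e[symmetric] div_mult_mod_eq mult.commute[of 3 "y div 3"])
qed
lemma w3_compl: "c < 3^h \<Longrightarrow> w3 (3^h - 1 - c) + w3 c = 2*h"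
proof (induction h arbitrary: c)
  case 0 then show ?case by simp
next
  case (Suc h)
  define c' where "c' = c div 3"
  define d where "d = c mod 3"
  have c: "c = 3*c' + d" unfolding c'_def d_def by simp
  have d: "d < 3" unfolding d_def by simp
  have c': "c' < 3^h" using Suc.prems unfolding c'_def by simp
  define e where "e = 3^h - 1 - c'"
  have "3^Suc h - 1 - c = 3*e + (2 - d)" using c d c' unfolding e_def by simp
  moreover have "w3 (3*e + (2 - d)) = (2 - d) + w3 e" by (rule w3_step) simp
  moreover have "w3 c = d + w3 c'" using c w3_step d by simp
  ultimately show ?case using Suc.IH[OF c'] d unfolding e_def by simp
qed
lemma w3_bal: "2*r+1 = 3^h \<Longrightarrow> a \<le> r \<Longrightarrow> w3 (r-a) + w3 (r+a) = 2*h"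
proof (induction h arbitrary: r a)
  case 0 then show ?case by simp
next
  case (Suc h)
  define r' where "r' = r div 3"
  have "(2*r+1) mod 3 = 0" using Suc.prems(1) by simp
  then have rr: "r = 3*r'+1" unfolding r'_def by presburger
  have r': "2*r'+1 = 3^h" using Suc.prems(1) rr by simp
  define a' where "a' = a div 3"
  have a: "a = 3*a' + a mod 3" unfolding a'_def by simp
  have "a mod 3 = 0 \<or> a mod 3 = 1 \<or> a mod 3 = 2" by presburger
  have st: "\<And>x d. d < 3 \<Longrightarrow> w3 (3*x+d) = d + w3 x" by (rule w3_step)
  have gen: "w3 (r-a) + w3 (r+a) = 2*Suc h"
    if "r - a = 3*x1 + d1" "r + a = 3*x2 + d2" "d1 < 3" "d2 < 3" "d1 + d2 = 2"
       "w3 x1 + w3 x2 = 2*h" for x1 x2 d1 d2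
  proof -
    have "w3 (r-a) = d1 + w3 x1" unfolding that(1) using that(3) by (rule st)
    moreover have "w3 (r+a) = d2 + w3 x2" unfolding that(2) using that(4) by (rule st)
    ultimately show ?thesis using that(5,6) by simp
  qed
  have "a mod 3 = 0 \<or> a mod 3 = 1 \<or> a mod 3 = 2" by presburger
  then show ?case
  proof (elim disjE)
    assume h: "a mod 3 = 0"
    have le: "a' \<le> r'" using Suc.prems(2) rr a h by linarith
    show ?thesis by (rule gen[of "r'-a'" 1 "r'+a'" 1]) (use rr a h le Suc.IH[OF r' le] in auto)
  next
    assume h: "a mod 3 = 1"
    have le: "a' \<le> r'" using Suc.prems(2) rr a h by linarith
    show ?thesis by (rule gen[of "r'-a'" 0 "r'+a'" 2]) (use rr a h le Suc.IH[OF r' le] in auto)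
  next
    assume h: "a mod 3 = 2"
    have le: "a'+1 \<le> r'" using Suc.prems(2) rr a h by linarith
    show ?thesis by (rule gen[of "r'-(a'+1)" 2 "r'+(a'+1)" 0]) (use rr a h le Suc.IH[OF r' le] in auto)
  qed
qed

lemma fin:
  assumes "v*i + t = a + t*(3*q^2)" "a < 3*q^2 - 1" "(q::nat) \<ge> 1"
  shows "(v*i) mod (3*q^2-1) = a"
proof -
  have "3*q^2 \<ge> 1" using assms(3) by simp
  then have "t*(3*q^2) = t*(3*q^2-1) + t" by (simp add: diff_mult_distrib2)
  then have "v*i = a + t*(3*q^2-1)" using assms(1) by simp
  then show ?thesis using assms(2) by simp
qed

lemma caseE:
  assumes q: "q = 3^h" and h: "even h" and a: "a = 2*s+2" and qa: "q = a + 2*d + 1"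
  shows "\<exists>i. 1 \<le> i \<and> i + 2 \<le> 3*q^2 \<and> (w3 i mod 4 = 1 \<or> w3 i mod 4 = 2) \<and>
     ((q+1) div 2 * i) mod (3*q^2-1) = a"
proof -
  define i where "i = 3^(Suc h)*(2*d+1) + (3*(2*s+1)+2)"
  have q3: "3^Suc h = 3*q" using q by simp
  have "w3 i = w3 (2*d+1) + w3 (3*(2*s+1)+2)" unfolding i_def
    by (rule w3_shift) (use q3 qa a in simp)
  also have "w3 (3*(2*s+1)+2) = 2 + w3 (2*s+1)" by (rule w3_step) simp
  also have "2*d+1 = 3^h - 1 - (2*s+1)" using q qa a by simp
  also have "w3 (3^h - 1 - (2*s+1)) + (2 + w3 (2*s+1)) = 2*h + 2"
    using w3_compl[of "2*s+1" h] q qa a by simp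
  finally have w: "w3 i = 2*h+2" .
  have wm: "w3 i mod 4 = 2" using w h by presburger
  have v: "(q+1) div 2 = s+d+2" using qa a by simp
  have i3: "i = 3*q*(2*d+1) + (6*s+5)" unfolding i_def q3 by simp
  have qq: "q = 2*s+2*d+3" using qa a by simp
  have eq: "(s+d+2)*i + (d+1) = a + (d+1)*(3*q^2)"
    unfolding i3 a qq by (simp add: algebra_simps power2_eq_square)
  have "q \<ge> 3" using qq by simp
  then have "9*(2*s+2) \<le> 3*q*(2*s+2)" by (intro mult_le_mono1) simp
  then have le: "i + 2 \<le> 3*q^2" unfolding i3 power2_eq_square using qq
    by (simp add: algebra_simps)
  have "a < 3*q^2 - 1" using le i3 a by simp
  then have "((q+1) div 2 * i) mod (3*q^2-1) = a" unfolding v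
    using fin[OF eq] qq by simp
  then show ?thesis using wm le unfolding i3 by (intro exI[of _ i]) (simp add: i3)
qed

lemma caseO1:
  assumes q: "q = 3^h" and h: "even h" and a: "a = 2*s+1" and qa: "q = 4*s+4*w+5"
  shows "\<exists>i. 1 \<le> i \<and> i + 2 \<le> 3*q^2 \<and> (w3 i mod 4 = 1 \<or> w3 i mod 4 = 2) \<and>
     ((q+1) div 2 * i) mod (3*q^2-1) = a"
proof -
  define i where "i = 3^(Suc h)*(2*w+1) + (3*(4*s+2*w+3)+1)"
  have q3: "3^Suc h = 3*q" using q by simp
  have s1: "w3 i = w3 (2*w+1) + w3 (3*(4*s+2*w+3)+1)" unfolding i_def
    by (rule w3_shift) (use q3 qa in simp)
  have s2: "w3 (3*(4*s+2*w+3)+1) = 1 + w3 (4*s+2*w+3)" by (rule w3_step) simp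
  have b: "w3 (2*s+2*w+2 - (2*s+1)) + w3 (2*s+2*w+2 + (2*s+1)) = 2*h"
    by (rule w3_bal) (use q qa in simp_all)
  have e1: "2*s+2*w+2 - (2*s+1) = 2*w+1" "2*s+2*w+2 + (2*s+1) = 4*s+2*w+3" by simp_all
  have w: "w3 i = 2*h+1"
    using b s1 s2 unfolding e1 by simp
  have wm: "w3 i mod 4 = 1" using w h by presburger
  have v: "(q+1) div 2 = 2*s+2*w+3" using qa by simp
  have i3: "i = 3*q*(2*w+1) + (12*s+6*w+10)" unfolding i_def q3 by simp
  have eq: "(2*s+2*w+3)*i + (w+1) = a + (w+1)*(3*q^2)"
    unfolding i3 a qa by (simp add: algebra_simps power2_eq_square)
  have "q \<ge> 1" using qa by simp
  then have "1*(3*(4*s+2*w+4)) \<le> q*(3*(4*s+2*w+4))" by (intro mult_le_mono1) simp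
  then have le: "i + 2 \<le> 3*q^2" unfolding i3 power2_eq_square using qa
    by (simp add: algebra_simps)
  have "a < 3*q^2 - 1" using le i3 a by simp
  then have "((q+1) div 2 * i) mod (3*q^2-1) = a" unfolding v
    using fin[OF eq] qa by simp
  then show ?thesis using wm le unfolding i3 by (intro exI[of _ i]) (simp add: i3)
qed

lemma caseO2:
  assumes q: "q = 3^h" and h: "even h" and qa: "q = 4*u+5"
    and a: "a = 2*u+3 \<or> a = 2*u+5 \<or> a = 2*u+7"
  shows "\<exists>i. 1 \<le> i \<and> i + 2 \<le> 3*q^2 \<and> (w3 i mod 4 = 1 \<or> w3 i mod 4 = 2) \<and>
     ((q+1) div 2 * i) mod (3*q^2-1) = a"
proof -
  have v: "(q+1) div 2 = 2*u+3" using qa by simp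
  have q3: "3^Suc h = 3*q" using q by simp
  have w3_2: "w3 2 = 2" by (subst w3.simps) simp
  have w3_1: "w3 1 = 1" "w3 (Suc 0) = Suc 0" by (subst w3.simps, simp)+
  have w3_3: "w3 3 = 1" by (subst w3.simps) (simp add: w3_1)
  have w3_4: "w3 4 = 2" by (subst w3.simps) (simp add: w3_1)
  have w3_6: "w3 6 = 2" by (subst w3.simps) (simp add: w3_2)
  have w3_12: "w3 12 = 2" by (subst w3.simps) (simp add: w3_4)
  have qq: "3*q^2 = 3*q*q" by (simp add: power2_eq_square)
  have big: "3*q*5 \<le> 3*q*q" using qa by (intro mult_le_mono2) simp
  from a show ?thesis
  proof (elim disjE)
    assume a: "a = 2*u+3"
    have eq: "(2*u+3)*1 + 0 = a + 0*(3*q^2)" using a by simp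
    have "a < 3*q^2 - 1" using a qa qq big by simp
    then have "((q+1) div 2 * 1) mod (3*q^2-1) = a" unfolding v
      using fin[OF eq] qa by simp
    moreover have "1 + 2 \<le> 3*q^2" using qq big qa by simp
    ultimately show ?thesis using w3_1 by (intro exI[of _ 1]) simp
  next
    assume a: "a = 2*u+5"
    define i where "i = 3^(Suc h)*(4*u+3) + 6"
    have "w3 i = w3 (4*u+3) + w3 6" unfolding i_def
      by (rule w3_shift) (use q3 qa in simp)
    also have "4*u+3 = 3^h - 1 - 1" using q qa by simp
    also have "w3 (3^h - 1 - 1) + w3 6 = 2*h + 1"
      using w3_compl[of 1 h] q qa w3_1 w3_6 by simp
    finally have w: "w3 i = 2*h+1" .
    have wm: "w3 i mod 4 = 1" using w h by presburger
    have i3: "i = 3*q*(4*u+3) + 6" unfolding i_def q3 by simp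
    have eq: "(2*u+3)*i + (2*u+2) = a + (2*u+2)*(3*q^2)"
      unfolding i3 a qa by (simp add: algebra_simps power2_eq_square)
    have le: "i + 2 \<le> 3*q^2" unfolding i3 qq using qa by (simp add: algebra_simps)
    have "a < 3*q^2 - 1" using a qa qq big by simp
    then have "((q+1) div 2 * i) mod (3*q^2-1) = a" unfolding v
      using fin[OF eq] qa by simp
    then show ?thesis using wm le unfolding i3 by (intro exI[of _ i]) (simp add: i3)
  next
    assume a: "a = 2*u+7"
    define i where "i = 3^(Suc h)*(4*u+1) + 12"
    have "w3 i = w3 (4*u+1) + w3 12" unfolding i_def
      by (rule w3_shift) (use q3 qa in simp)
    also have "4*u+1 = 3^h - 1 - 3" using q qa by simp
    also have "w3 (3^h - 1 - 3) + w3 12 = 2*h + 1"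
      using w3_compl[of 3 h] q qa w3_3 w3_12 by simp
    finally have w: "w3 i = 2*h+1" .
    have wm: "w3 i mod 4 = 1" using w h by presburger
    have i3: "i = 3*q*(4*u+1) + 12" unfolding i_def q3 by simp
    have eq: "(2*u+3)*i + (2*u+1) = a + (2*u+1)*(3*q^2)"
      unfolding i3 a qa by (simp add: algebra_simps power2_eq_square)
    have le: "i + 2 \<le> 3*q^2" unfolding i3 qq using qa by (simp add: algebra_simps)
    have "a < 3*q^2 - 1" using a qa qq big by simp
    then have "((q+1) div 2 * i) mod (3*q^2-1) = a" unfolding v
      using fin[OF eq] qa by simp
    then show ?thesis using wm le unfolding i3 by (intro exI[of _ i]) (simp add: i3)
  qed
qed

theorem lemma3:
  fixes m n v \<delta> :: nat
  assumes "m mod 4 = 1" and "m > 1"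
    and "n = 3 ^ m - 1"
    and "v = (3 ^ ((m - 1) div 2) + 1) div 2"
    and "\<delta> = (3 ^ ((m - 1) div 2) + 13) div 2"
  shows "gcd v n = 1 \<and> {1..<\<delta>} \<subseteq> (\<lambda>i. (v * i) mod n) ` T_set 1 2 m"
proof -
  define k where "k = m div 4"
  have m: "m = 4*k+1" using assms(1) unfolding k_def by presburger
  have k1: "k \<ge> 1" using m assms(2) by simp
  define h where "h = 2*k"
  have h: "(m - 1) div 2 = h" unfolding h_def m by simp
  define q where "q = (3::nat)^h"
  have q9: "q = 9^k" unfolding q_def h_def by (simp add: power_mult)
  have m3: "(3::nat)^m = 3*q^2" unfolding m q_def h_def
    by (simp add: power_mult[symmetric] power_add mult.commute)
  have "q mod 4 = 1" unfolding q9 using power_mod[of "9::nat" 4 k] by simp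
  then obtain u where qu: "q = 4*u+1" by (metis div_mult_mod_eq mult.commute)
  have "q \<ge> 9" unfolding q9 using k1 by (metis power_increasing power_one_right zero_less_numeral one_le_numeral le_less)
  then have u2: "u \<ge> 2" using qu by simp
  have v: "v = 2*u+1" using assms(4) h qu q_def by simp
  have d: "\<delta> = 2*u+7" using assms(5) h qu q_def by simp
  have n: "n = 3*q^2 - 1" using assms(3) m3 by simp
  have hev: "even h" unfolding h_def by simp
  have vq: "(q+1) div 2 = v" using v qu by simp
  have n2: "n = v*(24*u) + 2" unfolding n v qu by (simp add: algebra_simps power2_eq_square)
  have g: "gcd v n = 1"
  proof -
    have "gcd v n = gcd v 2" unfolding n2 by (metis gcd_add_mult add.commute mult.commute)
    also have "\<dots> = 1"
    proof -
      have "gcd (2::nat) (1 + u*2) = gcd 2 1" by (metis gcd_add_mult add.commute mult.commute)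
      then show ?thesis unfolding v by (simp add: gcd.commute add.commute mult.commute)
    qed
    finally show ?thesis .
  qed
  have main: "a \<in> (\<lambda>i. (v * i) mod n) ` T_set 1 2 m" if a: "1 \<le> a" "a < 2*u+7" for a
  proof -
    have "\<exists>i. 1 \<le> i \<and> i + 2 \<le> 3*q^2 \<and> (w3 i mod 4 = 1 \<or> w3 i mod 4 = 2) \<and>
         ((q+1) div 2 * i) mod (3*q^2-1) = a"
    proof (cases "even a")
      case True
      show ?thesis
      proof (cases "a \<le> q")
        case True
        then show ?thesis using \<open>even a\<close> a qu
          by (intro caseE[OF q_def hev, of a "a div 2 - 1" "(q - a - 1) div 2"]) presburger+
      next
        case False
        then have "u = 2" "a = 10" using \<open>even a\<close> a qu u2 by presburger+
        then have q: "q = 9" using qu by simp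
        have "w3 2 = 2" by (subst w3.simps) simp
        then show ?thesis unfolding q \<open>a = 10\<close> by (intro exI[of _ 2]) simp
      qed
    next
      case False
      show ?thesis
      proof (cases "a \<le> 2*u")
        case True
        then show ?thesis using \<open>odd a\<close> a qu
          by (intro caseO1[OF q_def hev, of a "a div 2" "u - 1 - a div 2"]) presburger+
      next
        case False
        then show ?thesis using \<open>odd a\<close> a qu u2
          by (intro caseO2[OF q_def hev, of "u - 1"]) presburger+
      qed
    qed
    then obtain i where i: "1 \<le> i" "i + 2 \<le> 3*q^2" "w3 i mod 4 = 1 \<or> w3 i mod 4 = 2"
        "(v * i) mod n = a" unfolding vq n by blast
    have "i \<in> T_set 1 2 m" unfolding T_set_def m3 using i by auto
    then show ?thesis using i(4) by force
  qed
  show ?thesis using g main d by auto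
qed
end
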